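(* Let $p=\xi_1+i\operatorname{Im}p$ be a smooth function on $T^\ast(\mathbb{R}^n)\smallsetminus0$ with $\operatorname{Im}p$ independent of $\xi_1$, and let $\gamma$ be a bicharacteristic of $\operatorname{Re}p=\xi_1$ with $L_p(\gamma)>0$. Then there exist bicharacteristics $\gamma_j$ of $\operatorname{Re}p$ and subintervals $\tilde\gamma_j\subset\gamma_j$ with $\gamma_j\dashrightarrow\gamma$, such that $|\tilde\gamma_j|\to L_p(\gamma)$, $\operatorname{Im}p$ strongly changes sign from $-$ to $+$ on $\gamma_j$, and $\operatorname{Im}p$ vanishes in a neighborhood of $\tilde\gamma_j$.
   Context: Write points of $T^\ast(\mathbb{R}^n)$ as $(x_1,x',\xi_1,\xi')$. A bicharacteristic of $\xi_1$ is $\gamma=[a,b]\times\{w_0\}=\{(t,x',0,\xi'):a\le t\le b\}$, $w_0=(x',0,\xi')$; write $g(t,w)$; $|\gamma|=b-a$. For $\gamma_j=[a_j,b_j]\times\{w_j\}$, $\gamma_j\dashrightarrow\gamma$ means $\liminf a_j\ge a$, $\limsup b_j\le b$, $w_j\to w_0$. $\operatorname{Im}p$ strongly changes sign from $-$ to $+$ on $[a,b]\times\{w_0\}$ if $\operatorname{Im}p(t,w_0)=0$ for $a\le t\le b$ and for every $\varepsilon>0$ there exist $a-\varepsilon<s_-<a$, $b<s_+<b+\varepsilon$ with $\operatorname{Im}p(s_-,w_0)<0<\operatorname{Im}p(s_+,w_0)$. If some sequence of bicharacteristics $\gamma_j$ of $\xi_1$ with this sign change satisfies $\gamma_j\dashrightarrow\gamma$,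 then $L_p(\gamma)=\inf\liminf_j|\gamma_j|$ over all such sequences. *)

theory Defs
  imports "HOL-Analysis.Analysis"
begin

text \<open>Points of the cotangent bundle of R^n are written (x1, x', xi1, xi') with
  x1, xi1 real and x', xi' in a Euclidean space 'a playing the role of R^(n-1).\<close>

type_synonym 'a cpt = "real \<times> 'a \<times> real \<times> 'a"

definition Tstar0 :: "('a::euclidean_space) cpt set" where
  "Tstar0 = {(x1, x', xi1, xi'). (xi1, xi') \<noteq> (0, 0)}"

fun Ck_on :: "nat \<Rightarrow> ('a::euclidean_space) set \<Rightarrow> ('a \<Rightarrow> 'b::real_normed_vector) \<Rightarrow> bool" where
  "Ck_on 0 S f = continuous_on S f"
| "Ck_on (Suc k) S f =
     (f differentiable_on S \<and> (\<forall>v\<in>Basis. Ck_on k S (\<lambda>x. frechet_derivative f (at x) v)))"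

definition smooth_on :: "('a::euclidean_space) set \<Rightarrow> ('a \<Rightarrow> 'b::real_normed_vector) \<Rightarrow> bool" where
  "smooth_on S f \<longleftrightarrow> (\<forall>k. Ck_on k S f)"

text \<open>w = (x', xi') stands for the point (x', 0, xi'); g(t,w) = (t, x', 0, xi').\<close>
definition gpt :: "real \<Rightarrow> 'a \<times> 'a \<Rightarrow> 'a cpt" where
  "gpt t w = (t, fst w, 0, snd w)"

text \<open>A bicharacteristic [a,b] x {w} of xi1 (lying in T*(R^n) minus 0).\<close>
definition is_bichar :: "real \<Rightarrow> real \<Rightarrow> ('a::euclidean_space) \<times> 'a \<Rightarrow> bool" where
  "is_bichar a b w \<longleftrightarrow> a \<le> b \<and> snd w \<noteq> 0"

definition strong_sign_change ::
  "(('a::euclidean_space) cpt \<Rightarrow> complex) \<Rightarrow> real \<Rightarrow> real \<Rightarrow> 'a \<times> 'a \<Rightarrow> bool" where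
  "strong_sign_change p a b w \<longleftrightarrow>
     (\<forall>t\<in>{a..b}. Im (p (gpt t w)) = 0) \<and>
     (\<forall>\<epsilon>>0. \<exists>sm sp. a - \<epsilon> < sm \<and> sm < a \<and> b < sp \<and> sp < b + \<epsilon> \<and>
                     Im (p (gpt sm w)) < 0 \<and> 0 < Im (p (gpt sp w)))"

definition bichar_conv ::
  "(nat \<Rightarrow> real) \<Rightarrow> (nat \<Rightarrow> real) \<Rightarrow> (nat \<Rightarrow> ('a::euclidean_space) \<times> 'a) \<Rightarrow>
   real \<Rightarrow> real \<Rightarrow> 'a \<times> 'a \<Rightarrow> bool" where
  "bichar_conv aj bj wj a b w \<longleftrightarrow>
     liminf (\<lambda>j. ereal (aj j)) \<ge> ereal a \<and> limsup (\<lambda>j. ereal (bj j)) \<le> ereal b \<and>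
     wj \<longlonglongrightarrow> w"

definition admissible_seq ::
  "(('a::euclidean_space) cpt \<Rightarrow> complex) \<Rightarrow> (nat \<Rightarrow> real) \<Rightarrow> (nat \<Rightarrow> real) \<Rightarrow>
   (nat \<Rightarrow> 'a \<times> 'a) \<Rightarrow> real \<Rightarrow> real \<Rightarrow> 'a \<times> 'a \<Rightarrow> bool" where
  "admissible_seq p aj bj wj a b w \<longleftrightarrow>
     (\<forall>j. is_bichar (aj j) (bj j) (wj j) \<and> strong_sign_change p (aj j) (bj j) (wj j)) \<and>
     bichar_conv aj bj wj a b w"

text \<open>L_p(gamma) (as an extended real), meaningful when some admissible sequence exists.\<close>
definition Lp :: "(('a::euclidean_space) cpt \<Rightarrow> complex) \<Rightarrow> real \<Rightarrow> real \<Rightarrow> 'a \<times> 'a \<Rightarrow> ereal" where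
  "Lp p a b w = Inf {liminf (\<lambda>j. ereal (bj j - aj j)) | aj bj wj. admissible_seq p aj bj wj a b w}"

end

theory Submission
  imports Defs
begin

lemma seg_lemma:
  fixes g :: "real \<Rightarrow> real"
  assumes cont: "continuous_on {t0..t1} g" and lt: "t0 < t1" and g0: "g t0 < 0" and g1: "g t1 > 0"
  shows "\<exists>\<alpha> \<beta>. t0 \<le> \<alpha> \<and> \<alpha> \<le> \<beta> \<and> \<beta> \<le> t1 \<and> (\<forall>t\<in>{\<alpha>..\<beta>}. g t = 0) \<and>
     (\<forall>\<epsilon>>0. \<exists>sm sp. \<alpha> - \<epsilon> < sm \<and> sm < \<alpha> \<and> \<beta> < sp \<and> sp < \<beta> + \<epsilon> \<and> g sm < 0 \<and> 0 < g sp)"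
proof -
  define Sp where "Sp = {t\<in>{t0..t1}. 0 < g t}"
  define \<beta> where "\<beta> = Inf Sp"
  have Spne: "Sp \<noteq> {}" and Spb: "bdd_below Sp" using g1 lt unfolding Sp_def by (auto intro: bdd_belowI[of _ t0])
  have b1: "\<beta> \<le> t1" unfolding \<beta>_def using g1 lt Spb by (intro cInf_lower) (auto simp: Sp_def)
  have b0: "t0 \<le> \<beta>" unfolding \<beta>_def using Spne by (intro cInf_greatest) (auto simp: Sp_def)
  have below: "g t \<le> 0" if "t0 \<le> t" "t < \<beta>" for t
  proof (rule ccontr)
    assume "\<not> g t \<le> 0"
    hence "t \<in> Sp" using that b1 by (auto simp: Sp_def)
    hence "\<beta> \<le> t" unfolding \<beta>_def using Spb by (rule cInf_lower)
    with that show False by simp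
  qed
  have gb_le: "g \<beta> \<le> 0"
  proof (cases "\<beta> = t0")
    case True thus ?thesis using g0 by simp
  next
    case False
    hence lt2: "t0 < \<beta>" using b0 by simp
    have cl: "closure {t0..<\<beta>} = {t0..\<beta>}" using lt2 by simp
    show ?thesis
      by (rule continuous_le_on_closure[of "{t0..<\<beta>}"]) (use cl b1 lt2 below in \<open>auto intro: continuous_on_subset[OF cont]\<close>)
  qed
  have gb_ge: "g \<beta> \<ge> 0"
  proof (rule continuous_ge_on_closure[where S=Sp and f=g and x=\<beta> and a=0])
    have "closure Sp \<subseteq> {t0..t1}" unfolding Sp_def by (rule closure_minimal) auto
    thus "continuous_on (closure Sp) g" using continuous_on_subset[OF cont] by blast
    show "\<beta> \<in> closure Sp" unfolding \<beta>_def by (rule closure_contains_Inf[OF Spne Spb])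
  qed (auto simp: Sp_def)
  have gb: "g \<beta> = 0" using gb_le gb_ge by simp
  define Sm where "Sm = {t\<in>{t0..\<beta>}. g t < 0}"
  define \<alpha> where "\<alpha> = Sup Sm"
  have Smne: "Sm \<noteq> {}" and Smb: "bdd_above Sm" using g0 b0 unfolding Sm_def by (auto intro: bdd_aboveI[of _ \<beta>])
  have a0: "t0 \<le> \<alpha>" unfolding \<alpha>_def using g0 b0 Smb by (intro cSup_upper) (auto simp: Sm_def)
  have a1: "\<alpha> \<le> \<beta>" unfolding \<alpha>_def using Smne by (intro cSup_least) (auto simp: Sm_def)
  have above: "g t \<ge> 0" if "\<alpha> < t" "t \<le> \<beta>" for t
  proof (rule ccontr)
    assume "\<not> g t \<ge> 0"
    hence "t \<in> Sm" using that a0 by (auto simp: Sm_def)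
    hence "t \<le> \<alpha>" unfolding \<alpha>_def using Smb by (rule cSup_upper)
    with that show False by simp
  qed
  have ga_ge: "g \<alpha> \<ge> 0"
  proof (cases "\<alpha> = \<beta>")
    case True thus ?thesis using gb by simp
  next
    case False
    hence lt2: "\<alpha> < \<beta>" using a1 by simp
    have cl: "closure {\<alpha><..\<beta>} = {\<alpha>..\<beta>}" using lt2 by simp
    show ?thesis
      by (rule continuous_ge_on_closure[of "{\<alpha><..\<beta>}"]) (use cl b1 a0 lt2 above in \<open>auto intro: continuous_on_subset[OF cont]\<close>)
  qed
  have ga_le: "g \<alpha> \<le> 0"
  proof (rule continuous_le_on_closure[where S=Sm and f=g and x=\<alpha> and a=0])
    have "closure Sm \<subseteq> {t0..t1}" unfolding Sm_def using b1 by (intro closure_minimal) auto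
    thus "continuous_on (closure Sm) g" using continuous_on_subset[OF cont] by blast
    show "\<alpha> \<in> closure Sm" unfolding \<alpha>_def by (rule closure_contains_Sup[OF Smne Smb])
  qed (auto simp: Sm_def)
  have ga: "g \<alpha> = 0" using ga_le ga_ge by simp
  have zero: "\<forall>t\<in>{\<alpha>..\<beta>}. g t = 0"
  proof
    fix t assume t: "t \<in> {\<alpha>..\<beta>}"
    show "g t = 0"
    proof (cases "t = \<alpha>")
      case True thus ?thesis using ga by simp
    next
      case False
      hence "g t \<ge> 0" using above t by auto
      moreover have "g t \<le> 0" using below[of t] gb t a0 by (cases "t = \<beta>") auto
      ultimately show ?thesis by simp
    qed
  qed
  have sc: "\<exists>sm sp. \<alpha> - \<epsilon> < sm \<and> sm < \<alpha> \<and> \<beta> < sp \<and> sp < \<beta> + \<epsilon> \<and> g sm < 0 \<and> 0 < g sp" if e: "\<epsilon> > 0" for \<epsilon>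
  proof -
    have "\<alpha> - \<epsilon> < Sup Sm" using e unfolding \<alpha>_def by simp
    then obtain sm where sm: "sm \<in> Sm" "\<alpha> - \<epsilon> < sm" using less_cSup_iff[OF Smne Smb] by blast
    have "sm \<le> \<alpha>" unfolding \<alpha>_def by (rule cSup_upper[OF sm(1) Smb])
    moreover have "g sm < 0" using sm by (auto simp: Sm_def)
    ultimately have sm2: "sm < \<alpha>" using ga by (cases "sm = \<alpha>") auto
    have "Inf Sp < \<beta> + \<epsilon>" using e unfolding \<beta>_def by simp
    then obtain sp where sp: "sp \<in> Sp" "sp < \<beta> + \<epsilon>" using cInf_less_iff[OF Spne Spb] by blast
    have "\<beta> \<le> sp" unfolding \<beta>_def by (rule cInf_lower[OF sp(1) Spb])
    moreover have "g sp > 0" using sp by (auto simp: Sp_def)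
    ultimately have sp2: "\<beta> < sp" using gb by (cases "sp = \<beta>") auto
    show ?thesis using sm sm2 sp sp2 \<open>g sm < 0\<close> \<open>g sp > 0\<close> by blast
  qed
  show ?thesis using a0 a1 b1 zero sc by blast
qed

lemma conv_lemma:
  fixes A B :: "nat \<Rightarrow> real" and W :: "nat \<Rightarrow> ('a::euclidean_space) \<times> 'a"
  assumes h: "\<forall>k. a - inverse (real (Suc k)) < A k \<and> B k < b + inverse (real (Suc k)) \<and>
                dist (W k) w < inverse (real (Suc k))"
  shows "bichar_conv A B W a b w"
proof -
  have i0: "(\<lambda>k. inverse (real (Suc k))) \<longlonglongrightarrow> 0" by (rule LIMSEQ_inverse_real_of_nat)
  have l1: "(\<lambda>k. ereal (a - inverse (real (Suc k)))) \<longlonglongrightarrow> ereal a"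
    using tendsto_diff[OF tendsto_const i0, of a] by simp
  have l2: "(\<lambda>k. ereal (b + inverse (real (Suc k)))) \<longlonglongrightarrow> ereal b"
    using tendsto_add[OF tendsto_const i0, of b] by simp
  have "ereal a = liminf (\<lambda>k. ereal (a - inverse (real (Suc k))))"
    using lim_imp_Liminf[OF _ l1] by simp
  also have "\<dots> \<le> liminf (\<lambda>k. ereal (A k))"
    by (rule Liminf_mono) (use h in \<open>auto intro!: always_eventually less_imp_le\<close>)
  finally have c1: "ereal a \<le> liminf (\<lambda>k. ereal (A k))" .
  have "limsup (\<lambda>k. ereal (B k)) \<le> limsup (\<lambda>k. ereal (b + inverse (real (Suc k))))"
    by (rule Limsup_mono) (use h in \<open>auto intro!: always_eventually less_imp_le\<close>)
  also have "\<dots> = ereal b"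
    using lim_imp_Limsup[OF _ l2] by simp
  finally have c2: "limsup (\<lambda>k. ereal (B k)) \<le> ereal b" .
  have "(\<lambda>k. dist (W k) w) \<longlonglongrightarrow> 0"
    by (rule Lim_null_comparison[OF _ i0]) (use h in \<open>auto intro!: always_eventually less_imp_le\<close>)
  hence c3: "W \<longlonglongrightarrow> w" using tendsto_dist_iff by blast
  show ?thesis unfolding bichar_conv_def using c1 c2 c3 by simp
qed

lemma choice3:
  assumes "\<forall>k. \<exists>x y z. P k x y z"
  shows "\<exists>X Y Z. \<forall>k. P k (X k) (Y k) (Z k)"
proof -
  have "\<forall>k. \<exists>T. P k (fst T) (fst (snd T)) (snd (snd T))"
  proof
    fix k obtain x y z where "P k x y z" using assms by blast
    thus "\<exists>T. P k (fst T) (fst (snd T)) (snd (snd T))" by (intro exI[of _ "(x, y, z)"]) simp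
  qed
  from choice[OF this] obtain G where "\<forall>k. P k (fst (G k)) (fst (snd (G k))) (snd (snd (G k)))" by blast
  thus ?thesis
    by (intro exI[of _ "\<lambda>k. fst (G k)"] exI[of _ "\<lambda>k. fst (snd (G k))"] exI[of _ "\<lambda>k. snd (snd (G k))"]) simp
qed

lemma choice5:
  assumes "\<forall>k. \<exists>x y z u v. P k x y z u v"
  shows "\<exists>X Y Z U V. \<forall>k. P k (X k) (Y k) (Z k) (U k) (V k)"
proof -
  have "\<forall>k. \<exists>T. P k (fst T) (fst (snd T)) (fst (snd (snd T))) (fst (snd (snd (snd T)))) (snd (snd (snd (snd T))))"
  proof
    fix k obtain x y z u v where "P k x y z u v" using assms by blast
    thus "\<exists>T. P k (fst T) (fst (snd T)) (fst (snd (snd T))) (fst (snd (snd (snd T)))) (snd (snd (snd (snd T))))"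
      by (intro exI[of _ "(x, y, z, u, v)"]) simp
  qed
  from choice[OF this] obtain G where
    "\<forall>k. P k (fst (G k)) (fst (snd (G k))) (fst (snd (snd (G k)))) (fst (snd (snd (snd (G k))))) (snd (snd (snd (snd (G k)))))"
    by blast
  thus ?thesis
    by (intro exI[of _ "\<lambda>k. fst (G k)"] exI[of _ "\<lambda>k. fst (snd (G k))"] exI[of _ "\<lambda>k. fst (snd (snd (G k)))"]
        exI[of _ "\<lambda>k. fst (snd (snd (snd (G k))))"] exI[of _ "\<lambda>k. snd (snd (snd (snd (G k))))"]) simp
qed

theorem lemma2p19:
  fixes p :: "('a::euclidean_space) cpt \<Rightarrow> complex"
    and a b :: real and w :: "'a \<times> 'a"
  assumes smooth: "smooth_on Tstar0 p"
    and re_p: "\<forall>x1 x' xi1 xi'. (x1, x', xi1, xi') \<in> Tstar0 \<longrightarrow> Re (p (x1, x', xi1, xi')) = xi1"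
    and im_indep: "\<forall>x1 x' xi1 eta1 xi'. (x1, x', xi1, xi') \<in> Tstar0 \<longrightarrow> (x1, x', eta1, xi') \<in> Tstar0
                     \<longrightarrow> Im (p (x1, x', xi1, xi')) = Im (p (x1, x', eta1, xi'))"
    and bichar: "is_bichar a b w"
    and Lp_defined: "\<exists>aj bj wj. admissible_seq p aj bj wj a b w"
    and Lp_pos: "Lp p a b w > 0"
  shows "\<exists>aj bj wj cj dj.
           (\<forall>j. is_bichar (aj j) (bj j) (wj j) \<and> aj j \<le> cj j \<and> cj j \<le> dj j \<and> dj j \<le> bj j) \<and>
           bichar_conv aj bj wj a b w \<and>
           (\<lambda>j. ereal (dj j - cj j)) \<longlonglongrightarrow> Lp p a b w \<and>
           (\<forall>j. strong_sign_change p (aj j) (bj j) (wj j)) \<and>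
           (\<forall>j. \<exists>U. open U \<and> U \<subseteq> Tstar0 \<and> (\<lambda>t. gpt t (wj j)) ` {cj j..dj j} \<subseteq> U \<and>
                    (\<forall>z\<in>U. Im (p z) = 0))"
proof -
  define f where "f t W = Im (p (gpt t W))" for t W
  have Teq: "(Tstar0 :: 'a cpt set) = {z. (fst (snd (snd z)), snd (snd (snd z))) \<noteq> (0, 0)}"
    unfolding Tstar0_def by auto
  have openT: "open (Tstar0 :: 'a cpt set)" unfolding Teq
    by (rule open_Collect_neq) (intro continuous_intros)+
  have contp: "continuous_on Tstar0 p" using smooth unfolding smooth_on_def
    by (metis Ck_on.simps(1))
  have gptT: "gpt t W \<in> Tstar0" if "snd W \<noteq> 0" for t and W :: "'a \<times> 'a"
    using that by (simp add: gpt_def Tstar0_def)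
  have contW: "isCont (f s) W" if "snd W \<noteq> 0" for s W
  proof -
    have "isCont p (gpt s W)"
      using contp openT gptT[OF that] continuous_on_eq_continuous_at by blast
    moreover have "isCont (\<lambda>W. gpt s W) W" unfolding gpt_def by (intro continuous_intros)
    ultimately have "isCont (\<lambda>W. p (gpt s W)) W" using isCont_o2 by blast
    thus ?thesis unfolding f_def by (rule continuous_Im)
  qed
  have contT: "continuous_on S (\<lambda>t. f t W)" if "snd W \<noteq> 0" for S W
  proof -
    have "continuous_on S (\<lambda>t. p (gpt t W))"
      by (rule continuous_on_compose2[OF contp]) (use gptT[OF that] in \<open>auto simp: gpt_def intro!: continuous_intros\<close>)
    thus ?thesis unfolding f_def by (intro continuous_intros)
  qed
  from Lp_defined obtain a0 b0 w0 where adm0: "admissible_seq p a0 b0 w0 a b w" by blast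
  have "Lp p a b w \<le> liminf (\<lambda>j. ereal (b0 j - a0 j))" unfolding Lp_def
    by (rule Inf_lower) (use adm0 in blast)
  also have "\<dots> \<le> liminf (\<lambda>j. ereal (b - a + 2))"
  proof (rule Liminf_mono)
    have cv: "bichar_conv a0 b0 w0 a b w" using adm0 by (simp add: admissible_seq_def)
    have e1: "eventually (\<lambda>j. ereal (a - 1) < ereal (a0 j)) sequentially"
    proof -
      have "ereal (a - 1) < ereal a" by simp
      thus ?thesis using cv unfolding bichar_conv_def le_Liminf_iff by blast
    qed
    have e2: "eventually (\<lambda>j. ereal (b0 j) < ereal (b + 1)) sequentially"
    proof -
      have "ereal (b + 1) > ereal b" by simp
      thus ?thesis using cv unfolding bichar_conv_def Limsup_le_iff by blast
    qed
    show "eventually (\<lambda>j. ereal (b0 j - a0 j) \<le> ereal (b - a + 2)) sequentially"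
      using e1 e2 by eventually_elim simp
  qed
  also have "\<dots> = ereal (b - a + 2)" by (simp add: Liminf_const)
  finally have Lfin: "Lp p a b w \<le> ereal (b - a + 2)" .
  then obtain L where LL: "Lp p a b w = ereal L" using Lp_pos by (cases "Lp p a b w") auto
  have Lpos: "L > 0" using Lp_pos LL by simp
  have key: "\<exists>\<eta>>0. \<forall>A B W. is_bichar A B W \<and> strong_sign_change p A B W \<and> a - \<eta> < A \<and> B < b + \<eta>
               \<and> dist W w < \<eta> \<longrightarrow> L - \<epsilon> \<le> B - A" if eps: "\<epsilon> > 0" for \<epsilon>
  proof (rule ccontr)
    assume neg: "\<not> ?thesis"
    have "\<forall>k. \<exists>A B W. is_bichar A B W \<and> strong_sign_change p A B W \<and> a - inverse (real (Suc k)) < A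
               \<and> B < b + inverse (real (Suc k)) \<and> dist W w < inverse (real (Suc k)) \<and> B - A < L - \<epsilon>"
    proof
      fix k :: nat
      have "inverse (real (Suc k)) > 0" by simp
      moreover have "\<forall>\<eta>>0. \<exists>A B W. is_bichar A B W \<and> strong_sign_change p A B W \<and> a - \<eta> < A \<and> B < b + \<eta>
               \<and> dist W w < \<eta> \<and> B - A < L - \<epsilon>" using neg by (meson not_le)
      ultimately show "\<exists>A B W. is_bichar A B W \<and> strong_sign_change p A B W \<and> a - inverse (real (Suc k)) < A
               \<and> B < b + inverse (real (Suc k)) \<and> dist W w < inverse (real (Suc k)) \<and> B - A < L - \<epsilon>"
        by blast
    qed
    from choice3[OF this] obtain FA FB FW where F: "\<forall>k. is_bichar (FA k) (FB k) (FW k) \<and> strong_sign_change p (FA k) (FB k) (FW k)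
         \<and> a - inverse (real (Suc k)) < FA k
               \<and> FB k < b + inverse (real (Suc k)) \<and> dist (FW k) w < inverse (real (Suc k)) \<and> FB k - FA k < L - \<epsilon>"
      by blast
    have "admissible_seq p FA FB FW a b w" unfolding admissible_seq_def
      using F conv_lemma[of a FA FB b FW w] by blast
    hence "Lp p a b w \<le> liminf (\<lambda>j. ereal (FB j - FA j))" unfolding Lp_def
      by (intro Inf_lower) blast
    also have "\<dots> \<le> liminf (\<lambda>j. ereal (L - \<epsilon>))"
      by (rule Liminf_mono) (use F in \<open>auto intro!: always_eventually less_imp_le\<close>)
    also have "\<dots> = ereal (L - \<epsilon>)" by (simp add: Liminf_const)
    finally show False using LL eps by simp
  qed
  have step: "\<exists>A B W C D. is_bichar A B W \<and> A \<le> C \<and> C \<le> D \<and> D \<le> B \<and>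
      a - inverse (real (Suc k)) < A \<and> B < b + inverse (real (Suc k)) \<and> dist W w < inverse (real (Suc k)) \<and>
      \<bar>D - C - L\<bar> < inverse (real (Suc k)) \<and> strong_sign_change p A B W \<and>
      (\<exists>U. open U \<and> U \<subseteq> Tstar0 \<and> (\<lambda>t. gpt t W) ` {C..D} \<subseteq> U \<and> (\<forall>z\<in>U. Im (p z) = 0))" for k
  proof -
    define ik where "ik = inverse (real (Suc k))"
    have ik: "ik > 0" unfolding ik_def by simp
    define \<epsilon> where "\<epsilon> = min (ik / 7) (L / 7)"
    have e: "\<epsilon> > 0" "7 * \<epsilon> \<le> ik" "7 * \<epsilon> \<le> L" using ik Lpos unfolding \<epsilon>_def by auto
    obtain \<eta> where eta: "\<eta> > 0" and keyh: "\<And>A B W. is_bichar A B W \<Longrightarrow> strong_sign_change p A B W \<Longrightarrow> a - \<eta> < A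
        \<Longrightarrow> B < b + \<eta> \<Longrightarrow> dist W w < \<eta> \<Longrightarrow> L - \<epsilon> \<le> B - A"
      using key[OF e(1)] by blast
    define \<eta>' where "\<eta>' = min \<eta> ik"
    have eta': "\<eta>' > 0" "\<eta>' \<le> \<eta>" "\<eta>' \<le> ik" using eta ik unfolding \<eta>'_def by auto
    have "Lp p a b w < ereal (L + \<epsilon>)" using LL e by simp
    then obtain x where "x \<in> {liminf (\<lambda>j. ereal (bj j - aj j)) | aj bj wj. admissible_seq p aj bj wj a b w}"
        "x < ereal (L + \<epsilon>)"
      unfolding Lp_def Inf_less_iff by blast
    then obtain aj bj wj where adm: "admissible_seq p aj bj wj a b w"
        and li: "liminf (\<lambda>j. ereal (bj j - aj j)) < ereal (L + \<epsilon>)" by blast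
    from li have "\<not> (ereal (L + \<epsilon>) \<le> liminf (\<lambda>j. ereal (bj j - aj j)))" by simp
    hence "\<not> (\<forall>y<ereal (L + \<epsilon>). eventually (\<lambda>j. y < ereal (bj j - aj j)) sequentially)"
      unfolding le_Liminf_iff .
    then obtain y where y: "y < ereal (L + \<epsilon>)" "\<not> eventually (\<lambda>j. y < ereal (bj j - aj j)) sequentially"
      by blast
    have fr: "frequently (\<lambda>j. bj j - aj j < L + \<epsilon>) sequentially"
    proof -
      have "frequently (\<lambda>j. \<not> y < ereal (bj j - aj j)) sequentially"
        using y(2) by (simp add: not_eventually)
      thus ?thesis
      proof (rule frequently_elim1)
        fix j assume "\<not> y < ereal (bj j - aj j)"
        hence "ereal (bj j - aj j) \<le> y" by simp
        hence "ereal (bj j - aj j) < ereal (L + \<epsilon>)" using y(1) by (rule le_less_trans)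
        thus "bj j - aj j < L + \<epsilon>" by simp
      qed
    qed
    have cv: "bichar_conv aj bj wj a b w" using adm by (simp add: admissible_seq_def)
    have ev1: "eventually (\<lambda>j. ereal (a - \<eta>'/2) < ereal (aj j)) sequentially"
    proof -
      have "ereal (a - \<eta>'/2) < ereal a" using eta' by simp
      thus ?thesis using cv unfolding bichar_conv_def le_Liminf_iff by blast
    qed
    have ev2: "eventually (\<lambda>j. ereal (bj j) < ereal (b + \<eta>'/2)) sequentially"
    proof -
      have "ereal (b + \<eta>'/2) > ereal b" using eta' by simp
      thus ?thesis using cv unfolding bichar_conv_def Limsup_le_iff by blast
    qed
    have ev3: "eventually (\<lambda>j. dist (wj j) w < \<eta>'/2) sequentially"
      using cv eta' unfolding bichar_conv_def by (intro tendstoD) auto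
    have "frequently (\<lambda>j. (ereal (a - \<eta>'/2) < ereal (aj j) \<and> ereal (bj j) < ereal (b + \<eta>'/2) \<and>
        dist (wj j) w < \<eta>'/2) \<and> bj j - aj j < L + \<epsilon>) sequentially"
      using frequently_eventually_conj[OF fr eventually_conj[OF ev1 eventually_conj[OF ev2 ev3]]] .
    then obtain j where j: "a - \<eta>'/2 < aj j" "bj j < b + \<eta>'/2" "dist (wj j) w < \<eta>'/2" "bj j - aj j < L + \<epsilon>"
      by (auto dest: frequently_ex)
    define A where "A = aj j"
    define B where "B = bj j"
    define W where "W = wj j"
    have bA: "is_bichar A B W" and sA: "strong_sign_change p A B W"
      using adm unfolding admissible_seq_def A_def B_def W_def by auto
    have jA: "a - \<eta>'/2 < A" "B < b + \<eta>'/2" "dist W w < \<eta>'/2" "B - A < L + \<epsilon>"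
      using j unfolding A_def B_def W_def by auto
    have lenA: "L - \<epsilon> \<le> B - A" using keyh[OF bA sA] jA eta' by auto
    have AB: "A \<le> B" and sW: "snd W \<noteq> 0" using bA by (auto simp: is_bichar_def)
    define \<delta> where "\<delta> = min \<epsilon> (\<eta>'/2)"
    have d: "\<delta> > 0" "\<delta> \<le> \<epsilon>" "\<delta> \<le> \<eta>'/2" using e eta' unfolding \<delta>_def by auto
    obtain sm sp where s: "A - \<delta> < sm" "sm < A" "B < sp" "sp < B + \<delta>" "f sm W < 0" "0 < f sp W"
      using sA d unfolding strong_sign_change_def f_def by blast
    define Q where "Q W' = (f sm W' < 0 \<and> 0 < f sp W' \<and> snd W' \<noteq> 0)" for W'
    have evQ: "eventually Q (at W)"
    proof -
      have "eventually (\<lambda>W'. f sm W' < 0) (at W)"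
        using contW[OF sW, of sm] s(5) unfolding isCont_def by (rule order_tendstoD)
      moreover have "eventually (\<lambda>W'. 0 < f sp W') (at W)"
        using contW[OF sW, of sp] s(6) unfolding isCont_def by (rule order_tendstoD)
      moreover have "eventually (\<lambda>W'. snd W' \<noteq> 0) (at W)"
        using tendsto_snd[OF tendsto_ident_at] sW by (rule tendsto_imp_eventually_ne)
      ultimately show ?thesis unfolding Q_def by eventually_elim auto
    qed
    then obtain d0 where d0: "d0 > 0" "\<forall>W'. W' \<noteq> W \<and> dist W' W < d0 \<longrightarrow> Q W'"
      unfolding eventually_at by auto
    define r where "r = min d0 (\<eta>'/2)"
    have r: "r > 0" "r \<le> \<eta>'/2" using d0 eta' unfolding r_def by auto
    have QW: "Q W'" if "dist W' W < r" for W'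
    proof (cases "W' = W")
      case True thus ?thesis using s sW unfolding Q_def by simp
    next
      case False thus ?thesis using d0(2) that unfolding r_def by (metis min_less_iff_conj)
    qed
    have zero: "f t W' = 0" if W': "dist W' W < r" and t: "sp - (L - \<epsilon>) \<le> t" "t \<le> sm + (L - \<epsilon>)" for W' t
    proof -
      have q: "f sm W' < 0" "0 < f sp W'" "snd W' \<noteq> 0" using QW[OF W'] unfolding Q_def by auto
      obtain \<alpha> \<beta> where ab: "sm \<le> \<alpha>" "\<alpha> \<le> \<beta>" "\<beta> \<le> sp" "\<forall>t\<in>{\<alpha>..\<beta>}. f t W' = 0"
        "\<forall>\<epsilon>>0. \<exists>sm sp. \<alpha> - \<epsilon> < sm \<and> sm < \<alpha> \<and> \<beta> < sp \<and> sp < \<beta> + \<epsilon> \<and> f sm W' < 0 \<and> 0 < f sp W'"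
        using seg_lemma[OF contT[OF q(3)] _ q(1) q(2)] s AB by fastforce
      have bi: "is_bichar \<alpha> \<beta> W'" using ab q by (simp add: is_bichar_def)
      have sc: "strong_sign_change p \<alpha> \<beta> W'" using ab unfolding strong_sign_change_def f_def by blast
      have "dist W' w \<le> dist W' W + dist W w" by (rule dist_triangle)
      hence dW: "dist W' w < \<eta>" using W' jA r eta' by linarith
      have "L - \<epsilon> \<le> \<beta> - \<alpha>" using keyh[OF bi sc] dW ab s jA d eta' by linarith
      hence "t \<in> {\<alpha>..\<beta>}" using t ab by auto
      thus ?thesis using ab(4) by blast
    qed
    define C where "C = sp - L + 2 * \<epsilon>"
    define D where "D = sm + L - 2 * \<epsilon>"
    define U :: "'a cpt set" where "U = (\<lambda>z. fst z) -` {sp - (L - \<epsilon>) <..< sm + (L - \<epsilon>)} \<inter>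
        (\<lambda>z. (fst (snd z), snd (snd (snd z)))) -` ball W r"
    have oU: "open U" unfolding U_def
      by (intro open_Int continuous_open_vimage) (auto intro!: continuous_intros)
    have UT: "U \<subseteq> Tstar0"
    proof
      fix z :: "'a cpt" assume "z \<in> U"
      hence "dist (fst (snd z), snd (snd (snd z))) W < r" unfolding U_def by (auto simp: dist_commute)
      hence "snd (fst (snd z), snd (snd (snd z))) \<noteq> 0" using QW unfolding Q_def by blast
      thus "z \<in> Tstar0" unfolding Teq by auto
    qed
    have Uz: "\<forall>z\<in>U. Im (p z) = 0"
    proof
      fix z :: "'a cpt" assume zU: "z \<in> U"
      obtain x1 x' xi1 xi' where z: "z = (x1, x', xi1, xi')" by (cases z) auto
      have dz: "dist (x', xi') W < r" using zU unfolding U_def z by (auto simp: dist_commute)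
      have "snd (x', xi') \<noteq> 0" using QW[OF dz] unfolding Q_def by blast
      hence T1: "(x1, x', xi1, xi') \<in> Tstar0" and T2: "(x1, x', 0, xi') \<in> Tstar0"
        by (auto simp: Tstar0_def)
      have "Im (p z) = Im (p (x1, x', 0, xi'))" unfolding z using im_indep T1 T2 by blast
      also have "\<dots> = f x1 (x', xi')" by (simp add: f_def gpt_def)
      also have "\<dots> = 0" using zero[OF dz] zU unfolding U_def z by auto
      finally show "Im (p z) = 0" .
    qed
    have imU: "(\<lambda>t. gpt t W) ` {C..D} \<subseteq> U"
      using e r unfolding U_def C_def D_def by (auto simp: gpt_def)
    show ?thesis
    proof (rule exI[of _ A], rule exI[of _ B], rule exI[of _ W], rule exI[of _ C], rule exI[of _ D], intro conjI)
      show "is_bichar A B W" by (rule bA)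
      show "A \<le> C" "C \<le> D" "D \<le> B" unfolding C_def D_def using s jA lenA d e by linarith+
      show "a - inverse (real (Suc k)) < A" "B < b + inverse (real (Suc k))" "dist W w < inverse (real (Suc k))"
        using jA eta' unfolding ik_def by linarith+
      show "\<bar>D - C - L\<bar> < inverse (real (Suc k))" unfolding C_def D_def ik_def[symmetric]
        using s jA lenA d e by (simp add: abs_less_iff)
      show "strong_sign_change p A B W" by (rule sA)
      show "\<exists>U. open U \<and> U \<subseteq> Tstar0 \<and> (\<lambda>t. gpt t W) ` {C..D} \<subseteq> U \<and> (\<forall>z\<in>U. Im (p z) = 0)"
        using oU UT imU Uz by blast
    qed
  qed
  obtain FA FB FW FC FD where F: "\<forall>k. is_bichar (FA k) (FB k) (FW k) \<and> FA k \<le> FC k \<and> FC k \<le> FD k \<and> FD k \<le> FB k \<and>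
      a - inverse (real (Suc k)) < FA k \<and> FB k < b + inverse (real (Suc k)) \<and> dist (FW k) w < inverse (real (Suc k)) \<and>
      \<bar>FD k - FC k - L\<bar> < inverse (real (Suc k)) \<and> strong_sign_change p (FA k) (FB k) (FW k) \<and>
      (\<exists>U. open U \<and> U \<subseteq> Tstar0 \<and> (\<lambda>t. gpt t (FW k)) ` {FC k..FD k} \<subseteq> U \<and> (\<forall>z\<in>U. Im (p z) = 0))"
  proof -
    have "\<forall>k. \<exists>A B W C D. is_bichar A B W \<and> A \<le> C \<and> C \<le> D \<and> D \<le> B \<and>
      a - inverse (real (Suc k)) < A \<and> B < b + inverse (real (Suc k)) \<and> dist W w < inverse (real (Suc k)) \<and>
      \<bar>D - C - L\<bar> < inverse (real (Suc k)) \<and> strong_sign_change p A B W \<and>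
      (\<exists>U. open U \<and> U \<subseteq> Tstar0 \<and> (\<lambda>t. gpt t W) ` {C..D} \<subseteq> U \<and> (\<forall>z\<in>U. Im (p z) = 0))"
      using step by blast
    from choice5[OF this] show ?thesis using that by blast
  qed
  have F1: "\<forall>k. is_bichar (FA k) (FB k) (FW k) \<and> FA k \<le> FC k \<and> FC k \<le> FD k \<and> FD k \<le> FB k"
    using F by simp
  have F2: "\<forall>k. a - inverse (real (Suc k)) < FA k \<and> FB k < b + inverse (real (Suc k)) \<and> dist (FW k) w < inverse (real (Suc k))"
    using F by simp
  have F3: "\<forall>k. \<bar>FD k - FC k - L\<bar> < inverse (real (Suc k))" using F by simp
  have F4: "\<forall>k. strong_sign_change p (FA k) (FB k) (FW k)" using F by simp
  have F5: "\<forall>k. \<exists>U. open U \<and> U \<subseteq> Tstar0 \<and> (\<lambda>t. gpt t (FW k)) ` {FC k..FD k} \<subseteq> U \<and> (\<forall>z\<in>U. Im (p z) = 0)"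
    using F by simp
  have conv: "bichar_conv FA FB FW a b w" using F2 by (rule conv_lemma)
  have "(\<lambda>k. FD k - FC k - L) \<longlonglongrightarrow> 0"
  proof (rule Lim_null_comparison[OF _ LIMSEQ_inverse_real_of_nat])
    show "\<forall>\<^sub>F k in sequentially. norm (FD k - FC k - L) \<le> inverse (real (Suc k))"
      using F3 by (intro always_eventually) (simp add: less_imp_le)
  qed
  hence "(\<lambda>k. FD k - FC k) \<longlonglongrightarrow> L" by (rule LIM_zero_cancel)
  hence lim: "(\<lambda>k. ereal (FD k - FC k)) \<longlonglongrightarrow> Lp p a b w" unfolding LL by simp
  show ?thesis
    by (rule exI[of _ FA], rule exI[of _ FB], rule exI[of _ FW], rule exI[of _ FC], rule exI[of _ FD])
       (intro conjI F1 conv lim F4 F5)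

qed

end
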